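(* Let $f:\mathbb{R}^n\to\mathbb{R}$ be continuously differentiable and bounded below, let $s$ be an integer with $0<s<n$, and let $\{\mathbf{x}^k\}$ be the sequence generated by the greedy sparse-simplex method. Then any accumulation point of $\{\mathbf{x}^k\}$ is a CW-minimum of the problem (P): minimize $f(\mathbf{x})$ subject to $\|\mathbf{x}\|_0\le s$.
   Context: $\|\mathbf{x}\|_0$ is the number of nonzero components, $C_s=\{\mathbf{x}:\|\mathbf{x}\|_0\le s\}$, $I_1(\mathbf{x})=\{i:x_i\neq0\}$, $\mathbf{e}_i$ the $i$-th standard basis vector. Greedy sparse-simplex method (all one-dimensional minima below are assumed attained): choose $\mathbf{x}^0\in C_s$. At step $k$: if $\|\mathbf{x}^k\|_0<s$, for each $i=1,\dots,n$ let $t_i\in\operatorname{argmin}_{t\in\mathbb{R}}f(\mathbf{x}^k+t\mathbf{e}_i)$ and $f_i=\min_t f(\mathbf{x}^k+t\mathbf{e}_i)$; let $i_k\in\operatorname{argmin}_i f_i$; if $f_{i_k}<f(\mathbf{x}^k)$ set $\mathbf{x}^{k+1}=\mathbf{x}^k+t_{i_k}\mathbf{e}_{i_k}$, otherwise stop. If $\|\mathbf{x}^k\|_0=s$, for each $i\in I_1(\mathbf{x}^k)$ and $j=1,\dots,n$ let $t_{i,j}\in\operatorname{argmin}_t f(\mathbf{x}^k-x_i^k\mathbf{e}_i+t\mathbf{e}_j)$ and $f_{i,j}=\min_t f(\mathbf{x}^k-x_i^k\mathbf{e}_i+t\mathbf{e}_j)$; let $(i_k,j_k)\in\operatorname{argmin}\{f_{i,j}:i\in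 I_1(\mathbf{x}^k),j=1,\dots,n\}$; if $f_{i_k,j_k}<f(\mathbf{x}^k)$ set $\mathbf{x}^{k+1}=\mathbf{x}^k-x^k_{i_k}\mathbf{e}_{i_k}+t_{i_k,j_k}\mathbf{e}_{j_k}$, otherwise stop. A feasible $\mathbf{x}^*$ is a coordinate-wise (CW) minimum of (P) if either $\|\mathbf{x}^*\|_0<s$ and $f(\mathbf{x}^* )=\min_t f(\mathbf{x}^*+t\mathbf{e}_i)$ for all $i$; or $\|\mathbf{x}^*\|_0=s$ and $f(\mathbf{x}^* )\le\min_t f(\mathbf{x}^*-x_i^*\mathbf{e}_i+t\mathbf{e}_j)$ for all $i\in I_1(\mathbf{x}^* )$, $j=1,\dots,n$. *)

theory Defs
  imports "HOL-Analysis.Analysis"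
begin

text \<open>Vectors in R^n are modelled as real^'n, with n = CARD('n).\<close>

definition l0norm :: "real^'n \<Rightarrow> nat" where
  "l0norm x = card {i. x $ i \<noteq> 0}"

definition I1 :: "real^'n \<Rightarrow> 'n set" where
  "I1 x = {i. x $ i \<noteq> 0}"

definition ee :: "'n \<Rightarrow> real^'n" where
  "ee i = axis i 1"

text \<open>One admissible iteration of the greedy sparse-simplex method from x to x'
  (only the case where the method does not stop).\<close>
definition gss_step :: "(real^'n \<Rightarrow> real) \<Rightarrow> nat \<Rightarrow> real^'n \<Rightarrow> real^'n \<Rightarrow> bool" where
  "gss_step f s x x' \<longleftrightarrow>
     (l0norm x < s \<and>
       (\<exists>i0 t0.
          (\<forall>t. f (x + t0 *\<^sub>R ee i0) \<le> f (x + t *\<^sub>R ee i0)) \<and>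
          (\<forall>i t. f (x + t0 *\<^sub>R ee i0) \<le> f (x + t *\<^sub>R ee i)) \<and>
          f (x + t0 *\<^sub>R ee i0) < f x \<and>
          x' = x + t0 *\<^sub>R ee i0))
   \<or> (l0norm x = s \<and>
       (\<exists>i0 j0 t0. i0 \<in> I1 x \<and>
          (\<forall>t. f (x - (x $ i0) *\<^sub>R ee i0 + t0 *\<^sub>R ee j0)
                \<le> f (x - (x $ i0) *\<^sub>R ee i0 + t *\<^sub>R ee j0)) \<and>
          (\<forall>i\<in>I1 x. \<forall>j t. f (x - (x $ i0) *\<^sub>R ee i0 + t0 *\<^sub>R ee j0)
                \<le> f (x - (x $ i) *\<^sub>R ee i + t *\<^sub>R ee j)) \<and>
          f (x - (x $ i0) *\<^sub>R ee i0 + t0 *\<^sub>R ee j0) < f x \<and>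
          x' = x - (x $ i0) *\<^sub>R ee i0 + t0 *\<^sub>R ee j0))"

definition is_min1 :: "(real \<Rightarrow> real) \<Rightarrow> real \<Rightarrow> bool" where
  "is_min1 g v \<longleftrightarrow> (\<exists>t. g t = v) \<and> (\<forall>t. v \<le> g t)"

definition CW_min :: "(real^'n \<Rightarrow> real) \<Rightarrow> nat \<Rightarrow> real^'n \<Rightarrow> bool" where
  "CW_min f s x \<longleftrightarrow>
     (l0norm x < s \<and> (\<forall>i. is_min1 (\<lambda>t. f (x + t *\<^sub>R ee i)) (f x)))
   \<or> (l0norm x = s \<and> (\<forall>i\<in>I1 x. \<forall>j. \<forall>t. f x \<le> f (x - (x $ i) *\<^sub>R ee i + t *\<^sub>R ee j)))"

end

theory Submission
  imports Defs "HOL-Library.Infinite_Set"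
begin

theorem theorem3p3:
  fixes f :: "real^'n \<Rightarrow> real" and s :: nat and x :: "nat \<Rightarrow> real^'n" and xs :: "real^'n"
  assumes C1: "\<exists>f' :: (real^'n) \<Rightarrow> ((real^'n) \<Rightarrow>\<^sub>L real).
                 (\<forall>y. (f has_derivative blinfun_apply (f' y)) (at y)) \<and> continuous_on UNIV f'"
    and bdd: "bdd_below (range f)"
    and s_pos: "0 < s" and s_lt: "s < CARD('n)"
    and attained: "\<And>y i. \<exists>t0. \<forall>t. f (y + t0 *\<^sub>R ee i) \<le> f (y + t *\<^sub>R ee i)"
    and x0: "l0norm (x 0) \<le> s"
    and steps: "\<And>k. gss_step f s (x k) (x (Suc k))"
    and acc: "\<exists>r. strict_mono r \<and> (x \<circ> r) \<longlonglongrightarrow> xs"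
  shows "CW_min f s xs"
proof -
  obtain f' where f': "\<forall>y. (f has_derivative blinfun_apply (f' y)) (at y)" using C1 by blast
  have contf: "\<And>y. isCont f y" using f' has_derivative_continuous by blast
  obtain r where r: "strict_mono r" "(x \<circ> r) \<longlonglongrightarrow> xs" using acc by blast
  have l0: "\<And>y::real^'n. l0norm y = card (I1 y)" unfolding l0norm_def I1_def by simp
  have dec: "\<And>k. f (x (Suc k)) < f (x k)" proof - fix k show "f (x (Suc k)) < f (x k)" using steps[of k] unfolding gss_step_def by auto qed
  have le_s: "\<And>k. l0norm (x k) \<le> s" proof - fix k show "l0norm (x k) \<le> s" using steps[of k] unfolding gss_step_def by fastforce qed
  obtain B where B: "\<forall>i. B \<le> f (x i)" using bdd unfolding bdd_below_def by auto
  have "decseq (\<lambda>k. f (x k))" using dec by (intro decseq_SucI) (simp add: less_imp_le)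
  then obtain L where L: "(\<lambda>k. f (x k)) \<longlonglongrightarrow> L" using decseq_convergent[OF _ B] by blast
  have "finite ((\<lambda>k. I1 (x (r k))) ` UNIV)" by simp
  then obtain k0 where "infinite {k \<in> UNIV. I1 (x (r k)) = I1 (x (r k0))}"
    using pigeonhole_infinite[of "UNIV::nat set"] by blast
  then obtain S where Ainf: "infinite {k. I1 (x (r k)) = S}" by auto
  define A where "A = {k. I1 (x (r k)) = S}"
  define q where "q = r \<circ> enumerate A"
  have Ainf': "infinite A" using Ainf A_def by simp
  have qS: "\<And>k. I1 (x (q k)) = S" using enumerate_in_set[OF Ainf'] unfolding q_def A_def by auto
  have qmono: "strict_mono q" unfolding q_def
    using r(1) strict_mono_enumerate[OF Ainf'] by (simp add: strict_mono_def)
  have Y: "(\<lambda>k. x (q k)) \<longlonglongrightarrow> xs"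
    using LIMSEQ_subseq_LIMSEQ[OF r(2) strict_mono_enumerate[OF Ainf']] unfolding q_def
    by (simp add: comp_def)
  have fY: "(\<lambda>k. f (x (q k))) \<longlonglongrightarrow> f xs" using isCont_tendsto_compose[OF contf Y] .
  have "(\<lambda>k. f (x (q k))) \<longlonglongrightarrow> L" using LIMSEQ_subseq_LIMSEQ[OF L qmono] by (simp add: comp_def)
  hence Lxs: "L = f xs" using fY LIMSEQ_unique by blast
  have smS: "strict_mono (Suc \<circ> q)" using qmono by (simp add: strict_mono_def)
  have fY1: "(\<lambda>k. f (x (Suc (q k)))) \<longlonglongrightarrow> f xs"
    using LIMSEQ_subseq_LIMSEQ[OF L smS] Lxs by (simp add: comp_def)
  have coord: "\<And>i. (\<lambda>k. x (q k) $ i) \<longlonglongrightarrow> xs $ i" using Y by (rule tendsto_vec_nth)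
  have suppS: "I1 xs \<subseteq> S"
  proof
    fix i assume i: "i \<in> I1 xs"
    show "i \<in> S"
    proof (rule ccontr)
      assume "i \<notin> S"
      hence "\<And>k. x (q k) $ i = 0" using qS unfolding I1_def by auto
      hence "(\<lambda>k. x (q k) $ i) \<longlonglongrightarrow> 0" by simp
      hence "xs $ i = 0" using coord LIMSEQ_unique by blast
      thus False using i unfolding I1_def by simp
    qed
  qed
  have finS: "finite S" by simp
  have cardS: "card S \<le> s" using le_s[of "q 0"] qS l0 by metis
  have cardxs: "l0norm xs \<le> card S" using l0 card_mono[OF finS suppS] by simp
  show ?thesis
  proof (cases "card S < s")
    case True
    have h: "\<And>k i t. f (x (Suc (q k))) \<le> f (x (q k) + t *\<^sub>R ee i)"
    proof -
      fix k i t
      have "l0norm (x (q k)) < s" using True qS l0 by metis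
      thus "f (x (Suc (q k))) \<le> f (x (q k) + t *\<^sub>R ee i)"
        using steps[of "q k"] unfolding gss_step_def by auto
    qed
    have ineq: "\<And>i t. f xs \<le> f (xs + t *\<^sub>R ee i)"
    proof -
      fix i t
      have "(\<lambda>k. f (x (q k) + t *\<^sub>R ee i)) \<longlonglongrightarrow> f (xs + t *\<^sub>R ee i)"
        by (intro isCont_tendsto_compose[OF contf] tendsto_intros Y)
      thus "f xs \<le> f (xs + t *\<^sub>R ee i)" using LIMSEQ_le[OF fY1] h by blast
    qed
    have "l0norm xs < s" using cardxs True by simp
    moreover have "\<forall>i. is_min1 (\<lambda>t. f (xs + t *\<^sub>R ee i)) (f xs)"
      unfolding is_min1_def using ineq by (metis add.right_neutral scale_zero_left)
    ultimately show ?thesis unfolding CW_min_def by blast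
  next
    case False
    hence cS: "card S = s" using cardS by simp
    have h: "\<And>k i j t. i \<in> S \<Longrightarrow> f (x (Suc (q k))) \<le> f (x (q k) - (x (q k) $ i) *\<^sub>R ee i + t *\<^sub>R ee j)"
    proof -
      fix k i j t assume iS: "i \<in> S"
      have "l0norm (x (q k)) = s" using cS qS l0 by metis
      thus "f (x (Suc (q k))) \<le> f (x (q k) - (x (q k) $ i) *\<^sub>R ee i + t *\<^sub>R ee j)"
        using steps[of "q k"] iS qS[of k] unfolding gss_step_def by auto
    qed
    have ineq: "\<And>i j t. i \<in> S \<Longrightarrow> f xs \<le> f (xs - (xs $ i) *\<^sub>R ee i + t *\<^sub>R ee j)"
    proof -
      fix i j t assume iS: "i \<in> S"
      have "(\<lambda>k. f (x (q k) - (x (q k) $ i) *\<^sub>R ee i + t *\<^sub>R ee j)) \<longlonglongrightarrow> f (xs - (xs $ i) *\<^sub>R ee i + t *\<^sub>R ee j)"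
        by (intro isCont_tendsto_compose[OF contf] tendsto_intros Y coord)
      thus "f xs \<le> f (xs - (xs $ i) *\<^sub>R ee i + t *\<^sub>R ee j)" using LIMSEQ_le[OF fY1] h[OF iS] by blast
    qed
    show ?thesis
    proof (cases "l0norm xs = s")
      case True
      have "I1 xs = S" using card_subset_eq[OF finS suppS] True cS l0 by simp
      thus ?thesis using True ineq unfolding CW_min_def by blast
    next
      case F2: False
      hence lt: "l0norm xs < s" using cardxs cS by simp
      have "I1 xs \<noteq> S" using F2 cS l0 by metis
      then obtain i0 where i0: "i0 \<in> S" "xs $ i0 = 0" using suppS unfolding I1_def by auto
      have "\<And>j t. f xs \<le> f (xs + t *\<^sub>R ee j)" using ineq[OF i0(1)] i0(2) by simp
      hence "\<forall>i. is_min1 (\<lambda>t. f (xs + t *\<^sub>R ee i)) (f xs)"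
        unfolding is_min1_def by (metis add.right_neutral scale_zero_left)
      thus ?thesis using lt unfolding CW_min_def by blast
    qed
  qed
qed

end
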